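(* Let $a_2>1$ and let $Y^{(1)},Y^{(2)}$ be independent $\chi^2_1$ random variables, and let $h$ be the density of $U=Y^{(1)}+a_2Y^{(2)}$. With $c_2=1-a_2^{-1}$, $p_0=a_2^{-1/2}$, $p_1=\tfrac12c_2p_0$, $p_2=\tfrac38c_2^2p_0$, one has $$\lim_{u\to0+}\big[h(u)h''(u)-\{h'(u)\}^2\big]=\frac{p_0p_2-p_1^2}{16}>0,$$ so $h$ is not log-concave on $(0,\infty)$, although the cdf of $U$ is. *)

theory Defs
  imports "HOL-Analysis.Analysis"
begin

definition chi2_1_density :: "real \<Rightarrow> real" where
  "chi2_1_density y = (if y > 0 then exp (- y / 2) / sqrt (2 * pi * y) else 0)"

definition scaled_chi2_1_density :: "real \<Rightarrow> real \<Rightarrow> real" where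
  "scaled_chi2_1_density a y = chi2_1_density (y / a) / a"

definition U_density :: "real \<Rightarrow> real \<Rightarrow> real" where
  "U_density a2 u = (\<integral>t. chi2_1_density t * scaled_chi2_1_density a2 (u - t) \<partial>lborel)"

definition U_cdf :: "real \<Rightarrow> real \<Rightarrow> real" where
  "U_cdf a2 u = (LINT t:{..u}|lborel. U_density a2 t)"

definition log_concave_on :: "real set \<Rightarrow> (real \<Rightarrow> real) \<Rightarrow> bool" where
  "log_concave_on S f \<longleftrightarrow> (\<forall>x\<in>S. f x \<ge> 0) \<and>
     (\<forall>x\<in>S. \<forall>y\<in>S. \<forall>l::real. 0 \<le> l \<and> l \<le> 1 \<longrightarrow>
        f (l * x + (1 - l) * y) \<ge> f x powr l * f y powr (1 - l))"

end

theory Submission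
  imports Defs
begin

definition ww :: "real \<Rightarrow> real \<Rightarrow> real" where
  "ww a p = 1/(2*a) + (1-1/a)*(1 - cos p)/4"

definition HH :: "real \<Rightarrow> nat \<Rightarrow> real \<Rightarrow> real" where
  "HH a k u = integral {0..pi} (\<lambda>p. (- ww a p)^k * exp (-(u * ww a p)))"

lemma cont_ww[continuous_intros]: "continuous_on S (f::'b::t2_space\<Rightarrow>real) \<Longrightarrow> continuous_on S (\<lambda>x. ww a (f x))"
  unfolding ww_def by (auto intro!: continuous_intros)

lemma HH_deriv: "(HH a k has_real_derivative HH a (Suc k) u) (at u)"
proof -
  have "((\<lambda>u. integral (cbox 0 pi) (\<lambda>p. (- ww a p)^k * exp (-(u * ww a p)))) has_field_derivative
        integral (cbox 0 pi) (\<lambda>p. (- ww a p)^Suc k * exp (-(u * ww a p)))) (at u within UNIV)"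
  proof (rule leibniz_rule_field_derivative)
    fix x t
    show "((\<lambda>x. (- ww a t)^k * exp (-(x * ww a t))) has_field_derivative (- ww a t)^Suc k * exp (-(x * ww a t))) (at x within UNIV)"
      by (auto intro!: derivative_eq_intros)
  next
    fix x
    show "(\<lambda>p. (- ww a p)^k * exp (-(x * ww a p))) integrable_on cbox 0 pi"
      by (intro integrable_continuous continuous_intros)
  next
    show "continuous_on (UNIV \<times> cbox 0 pi) (\<lambda>(x, t). (- ww a t)^Suc k * exp (-(x * ww a t)))"
      by (auto simp: split_beta intro!: continuous_intros)
  qed auto
  then show ?thesis unfolding HH_def by (simp del: power_Suc)
qed

lemma HH_cont: "isCont (HH a k) u"
  using HH_deriv DERIV_isCont by blast

lemma HH_contO[continuous_intros]: "continuous_on S (HH a k)"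
  using HH_cont continuous_at_imp_continuous_on by blast

lemma int_cos: "(cos has_integral 0) {0..pi}"
proof -
  have "(cos has_integral (sin pi - sin 0)) {0..pi}"
    by (rule fundamental_theorem_of_calculus)
       (auto intro!: derivative_eq_intros simp: has_real_derivative_iff_has_vector_derivative[symmetric])
  then show ?thesis by simp
qed

lemma int_cos2: "((\<lambda>p. cos p ^ 2) has_integral pi/2) {0..pi}"
proof -
  have "((\<lambda>p. cos p ^ 2) has_integral ((\<lambda>p. (p + sin p * cos p)/2) pi - (\<lambda>p. (p + sin p * cos p)/2) 0)) {0..pi}"
  proof (rule fundamental_theorem_of_calculus)
    fix x :: real
    have "((\<lambda>p. (p + sin p * cos p)/2) has_real_derivative (1 + (cos x * cos x - sin x * sin x))/2) (at x within {0..pi})"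
      by (auto intro!: derivative_eq_intros)
    moreover have "(1 + (cos x * cos x - sin x * sin x))/2 = cos x ^ 2"
      using sin_squared_eq[of x] by (simp add: power2_eq_square)
    ultimately show "((\<lambda>p. (p + sin p * cos p)/2) has_vector_derivative cos x ^ 2) (at x within {0..pi})"
      by (simp add: has_real_derivative_iff_has_vector_derivative[symmetric])
  qed auto
  then show ?thesis by simp
qed

lemma int_quad: "((\<lambda>p. c0 + c1 * cos p + c2 * cos p ^ 2) has_integral (c0*pi + c2*(pi/2))) {0..pi}"
proof -
  have "((\<lambda>p. c0) has_integral c0 * pi) {0..pi}"
    using has_integral_const_real[of c0 0 pi] by (simp add: mult.commute)
  moreover have "((\<lambda>p. c1 * cos p) has_integral c1 * 0) {0..pi}"
    by (rule has_integral_mult_right[OF int_cos])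
  moreover have "((\<lambda>p. c2 * cos p ^ 2) has_integral c2 * (pi/2)) {0..pi}"
    by (rule has_integral_mult_right[OF int_cos2])
  ultimately have "((\<lambda>p. c0 + c1 * cos p + c2 * cos p ^ 2) has_integral (c0*pi + c1*0 + c2*(pi/2))) {0..pi}"
    by (intro has_integral_add)
  then show ?thesis by simp
qed

lemma HH0_0: "HH a 0 0 = pi"
  using int_quad[of 1 0 0] unfolding HH_def by (simp add: integral_unique)

lemma quad_id: "(- (A + B*(1-c)/4))^2 = (A + B/4)^2 + (- 2*(A + B/4)*(B/4)) * c + (B/4)^2 * c^2"
  for A B c :: real by (simp add: power2_eq_square field_simps)

lemma lin_id: "(- (A + B*(1-c)/4))^1 = - (A + B/4) + (B/4) * c + 0 * c^2"
  for A B c :: real by (simp add: field_simps)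

lemma HH1_0: "HH a 1 0 = - (1/(2*a) + (1-1/a)/4) * pi"
proof -
  have eq: "(\<lambda>p. (- ww a p)^1 * exp (-(0 * ww a p))) = (\<lambda>p. (- (1/(2*a) + (1-1/a)/4)) + ((1-1/a)/4) * cos p + 0 * cos p ^ 2)"
    by (rule ext) (simp only: ww_def lin_id mult_zero_left minus_zero exp_zero mult_1_right)
  show ?thesis unfolding HH_def eq by (rule trans[OF integral_unique[OF int_quad]]) simp
qed

lemma HH2_0: "HH a 2 0 = (1/(2*a) + (1-1/a)/4)^2 * pi + ((1-1/a)/4)^2 * (pi/2)"
proof -
  have eq: "(\<lambda>p. (- ww a p)^2 * exp (-(0 * ww a p))) = (\<lambda>p. (1/(2*a) + (1-1/a)/4)^2 + (- 2*(1/(2*a) + (1-1/a)/4)*((1-1/a)/4)) * cos p + ((1-1/a)/4)^2 * cos p ^ 2)"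
    by (rule ext) (simp only: ww_def quad_id mult_zero_left minus_zero exp_zero mult_1_right)
  show ?thesis unfolding HH_def eq by (rule trans[OF integral_unique[OF int_quad]]) simp
qed

lemma aux_le: "(x::real) > 0 \<Longrightarrow> x \<le> 1 \<Longrightarrow> P \<le> (1-x)*2 \<Longrightarrow> x/2 + P/4 \<le> 1"
  by (simp add: algebra_simps)

lemma ww_bounds: assumes "a \<ge> 1" shows "0 \<le> ww a p" "ww a p \<le> 1"
proof -
  have c: "-1 \<le> cos p" "cos p \<le> 1" by auto
  have i: "0 < 1/a" "1/a \<le> 1" using assms by auto
  have "0 \<le> (1-1/a)*(1 - cos p)/4" using c i by (intro divide_nonneg_pos mult_nonneg_nonneg) auto
  then show "0 \<le> ww a p" using i unfolding ww_def by auto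
  have "(1-1/a)*(1 - cos p) \<le> (1-1/a)*2" using c i by (intro mult_left_mono) auto
  then have "(1/a)/2 + ((1-1/a)*(1 - cos p))/4 \<le> 1"
    using i by (intro aux_le) auto
  then show "ww a p \<le> 1" unfolding ww_def by simp
qed

lemma HH_integrable: "(\<lambda>p. (- ww a p)^k * exp (-(u * ww a p))) integrable_on {0..pi}"
  by (intro integrable_continuous_interval continuous_intros)

lemma HH0_lower: assumes "a \<ge> 1" shows "pi * exp (-\<bar>u\<bar>) \<le> HH a 0 u"
proof -
  have "integral {0..pi} (\<lambda>p. exp (-\<bar>u\<bar>)) \<le> integral {0..pi} (\<lambda>p. (- ww a p)^0 * exp (-(u * ww a p)))"
  proof (rule integral_le)
    fix p
    have "\<bar>u * ww a p\<bar> \<le> \<bar>u\<bar>" using ww_bounds[OF assms, of p]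
      by (simp add: abs_mult mult_left_le)
    then show "exp (-\<bar>u\<bar>) \<le> (- ww a p)^0 * exp (-(u * ww a p))" by simp
  qed (use HH_integrable[of a 0 u] in auto)
  then show ?thesis unfolding HH_def by (simp add: mult.commute)
qed

lemma HH0_pos: assumes "a \<ge> 1" shows "0 < HH a 0 u"
  using HH0_lower[OF assms, of u] by (smt (verit) exp_gt_zero mult_pos_pos pi_gt_zero)

lemma HH1_nonpos: assumes "a \<ge> 1" shows "HH a 1 u \<le> 0"
proof -
  have "integral {0..pi} (\<lambda>p. (- ww a p)^1 * exp (-(u * ww a p))) \<le> integral {0..pi} (\<lambda>p. 0)"
    by (rule integral_le) (use HH_integrable[of a 1 u] ww_bounds[OF assms] in auto)
  then show ?thesis unfolding HH_def by simp
qed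

lemma chi2_nonneg: "0 \<le> chi2_1_density y"
  unfolding chi2_1_density_def by auto

lemma U_density_nonpos: assumes "a > 0" "u \<le> 0" shows "U_density a u = 0"
proof -
  have "(\<lambda>t. chi2_1_density t * scaled_chi2_1_density a (u - t)) = (\<lambda>t. 0)"
  proof
    fix t show "chi2_1_density t * scaled_chi2_1_density a (u - t) = 0"
    proof (cases "t > 0")
      case True
      then have "(u - t) / a < 0" using assms by (simp add: divide_neg_pos)
      then show ?thesis unfolding scaled_chi2_1_density_def chi2_1_density_def by simp
    qed (simp add: chi2_1_density_def)
  qed
  then show ?thesis unfolding U_density_def by simp
qed

lemma sqrt_prod_eq:
  assumes a: "a > 0" and t: "t = u*(1 - cos x)/2" and s: "s = u * sin x / 2" and "s > 0"
  shows "sqrt (2*pi*t) * sqrt (2*pi*((u-t)/a)) = 2*pi* s / sqrt a"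
proof -
  have "t * (u - t) = u^2 * (1 - (cos x)^2)/4" unfolding t by (simp add: power2_eq_square field_simps)
  also have "\<dots> = s^2" unfolding s using sin_squared_eq[of x] by (simp add: power_mult_distrib power_divide)
  finally have "t * (u - t) = s^2" .
  have "sqrt (2*pi*t) * sqrt (2*pi*((u-t)/a)) = sqrt ((2*pi)^2 * (t*(u-t)) / a)"
    by (simp add: real_sqrt_mult[symmetric] power2_eq_square field_simps)
  also have "\<dots> = sqrt ((2*pi* s)^2) / sqrt a"
    using \<open>t * (u - t) = s^2\<close> by (simp add: real_sqrt_divide power_mult_distrib)
  also have "\<dots> = 2*pi* s / sqrt a" using \<open>s > 0\<close> by simp
  finally show ?thesis .
qed

lemma point_eq:
  assumes a: "a > 0" and u: "u > 0" and x: "0 < x" "x < pi"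
  shows "chi2_1_density (u*(1 - cos x)/2) * scaled_chi2_1_density a (u - u*(1 - cos x)/2) * (u * sin x / 2)
       = exp (-(u * ww a x)) / (2*pi* sqrt a)"
proof -
  define t where "t = u*(1 - cos x)/2"
  define s where "s = u * sin x / 2"
  have sx: "sin x > 0" using x sin_gt_zero by auto
  have cx: "cos x < 1" "cos x > -1" using x cos_monotone_0_pi[of 0 x] cos_monotone_0_pi[of x pi] by auto
  have sp: "s > 0" unfolding s_def using sx u by simp
  have tp: "t > 0" unfolding t_def using cx u by simp
  have "0 < u*(1+cos x)" using cx u by simp
  then have utp: "(u - t)/a > 0" unfolding t_def using a by (simp add: field_simps distrib_left)
  have sq: "sqrt (2*pi*t) * sqrt (2*pi*((u-t)/a)) = 2*pi* s / sqrt a"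
    by (rule sqrt_prod_eq[OF a t_def s_def sp])
  have ex: "exp (- t / 2) * exp (- ((u - t) / a) / 2) = exp (-(u * ww a x))"
  proof -
    have "- t / 2 + - ((u - t) / a) / 2 = -(u * ww a x)"
      unfolding t_def ww_def using a by (simp add: field_simps)
    then show ?thesis by (simp add: exp_add[symmetric])
  qed
  have sa: "sqrt a > 0" using a by simp
  have "chi2_1_density t * scaled_chi2_1_density a (u - t) * s
      = (exp (- t / 2) * exp (- ((u - t) / a) / 2)) * s / ((sqrt (2*pi*t) * sqrt (2*pi*((u-t)/a))) * a)"
    unfolding scaled_chi2_1_density_def chi2_1_density_def using tp utp by simp
  also have "\<dots> = exp (-(u * ww a x)) * s / ((2*pi* s / sqrt a) * a)" unfolding sq ex ..
  also have "\<dots> = exp (-(u * ww a x)) / (2*pi* sqrt a)"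
    using sp sa a by (simp add: field_simps)
  finally show ?thesis unfolding t_def s_def .
qed

lemma cont_f:
  assumes a: "a > 0" and t: "0 < t" "t < u"
  shows "isCont (\<lambda>t. chi2_1_density t * scaled_chi2_1_density a (u - t)) t"
proof -
  let ?g = "\<lambda>t. (exp (- t / 2) / sqrt (2 * pi * t)) * (exp (- ((u - t)/a) / 2) / sqrt (2 * pi * ((u - t)/a)) / a)"
  have ev: "eventually (\<lambda>y. chi2_1_density y * scaled_chi2_1_density a (u - y) = ?g y) (nhds t)"
  proof -
    have "eventually (\<lambda>y. y \<in> {0<..<u}) (nhds t)"
      using t by (intro eventually_nhds_in_open) auto
    then show ?thesis
    proof eventually_elim
      case (elim y)
      then have "(u - y)/a > 0" using a by simp
      with elim show ?case unfolding scaled_chi2_1_density_def chi2_1_density_def by simp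
    qed
  qed
  have "(u - t)/a > 0" using a t by simp
  then have "isCont ?g t" using t a
    by (intro continuous_intros) auto
  then show ?thesis using isCont_cong[OF ev] by simp
qed

lemma U_density_pos:
  assumes a: "a > 0" and u: "u > 0"
  shows "U_density a u = HH a 0 u / (2*pi* sqrt a)"
proof -
  define f where "f = (\<lambda>t. chi2_1_density t * scaled_chi2_1_density a (u - t))"
  define g where "g = (\<lambda>x::real. u*(1 - cos x)/2)"
  define g' where "g' = (\<lambda>x::real. u * sin x / 2)"
  define Ec where "Ec = (\<lambda>x. exp (-(u * ww a x)) / (2*pi* sqrt a))"
  have contEc: "continuous_on S Ec" for S
    unfolding Ec_def by (intro continuous_intros) (use a in auto)
  have fzero: "f t = indicator {0<..<u} t *\<^sub>R f t" for t
  proof (cases "t \<in> {0<..<u}")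
    case False
    then consider "t \<le> 0" | "t \<ge> u" by force
    then show ?thesis
    proof cases
      case 1 then show ?thesis unfolding f_def chi2_1_density_def by simp
    next
      case 2
      then have "(u - t)/a \<le> 0" using a by (simp add: divide_nonpos_pos)
      then show ?thesis unfolding f_def scaled_chi2_1_density_def chi2_1_density_def by simp
    qed
  qed simp
  have S1: "U_density a u = interval_lebesgue_integral lborel (ereal 0) (ereal u) f"
  proof -
    have "interval_lebesgue_integral lborel (ereal 0) (ereal u) f = (LINT t : {0<..<u} | lborel. f t)"
      using u by (simp add: interval_lebesgue_integral_le_eq)
    also have "\<dots> = (LINT t | lborel. f t)"
      unfolding set_lebesgue_integral_def using fzero by (metis (no_types))
    finally show ?thesis unfolding U_density_def f_def by simp
  qed
  have fg: "f (g x) * g' x = Ec x" if "0 < x" "x < pi" for x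
    unfolding f_def g_def g'_def Ec_def using point_eq[OF a u that] by simp
  have intEc: "set_integrable lborel {0..pi} Ec"
    unfolding set_integrable_def by (rule borel_integrable_compact) (auto intro: contEc)
  have intfg: "set_integrable lborel (einterval 0 (ereal pi)) (\<lambda>x. f (g x) * g' x)"
  proof -
    have "set_integrable lborel {0<..<pi} Ec"
      by (rule set_integrable_subset[OF intEc]) auto
    moreover have "set_integrable lborel {0<..<pi} (\<lambda>x. f (g x) * g' x) = set_integrable lborel {0<..<pi} Ec"
      by (rule set_integrable_cong) (auto simp: fg)
    ultimately show ?thesis by (simp add: zero_ereal_def)
  qed
  have S2: "interval_lebesgue_integral lborel (ereal 0) (ereal u) f
        = interval_lebesgue_integral lborel 0 (ereal pi) (\<lambda>x. f (g x) * g' x)"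
  proof (rule interval_integral_substitution_nonneg(2)[where a=0 and b="ereal pi" and g=g and g'=g' and f=f])
    show "0 < ereal pi" by (simp add: zero_ereal_def)
    show "DERIV g x :> g' x" for x
      unfolding g_def g'_def by (auto intro!: derivative_eq_intros)
    show "isCont f (g x)" if "0 < ereal x" "ereal x < ereal pi" for x
    proof -
      have x: "0 < x" "x < pi" using that by (auto simp: zero_ereal_def)
      have "cos x < 1" "cos x > -1" using x cos_monotone_0_pi[of 0 x] cos_monotone_0_pi[of x pi] by auto
      then have "0 < u*(1+cos x)" "0 < u*(1-cos x)" using u by auto
      then have "0 < g x" "g x < u" unfolding g_def by (auto simp: field_simps distrib_left)
      then show ?thesis unfolding f_def by (rule cont_f[OF a])
    qed
    show "isCont g' x" for x unfolding g'_def by (auto intro!: continuous_intros)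
    show "0 \<le> f (g x)" for x unfolding f_def scaled_chi2_1_density_def
      using chi2_nonneg a by (intro mult_nonneg_nonneg divide_nonneg_pos) auto
    show "0 \<le> g' x" if "0 \<le> ereal x" "ereal x \<le> ereal pi" for x
    proof -
      have "0 \<le> x" "x \<le> pi" using that by (auto simp: zero_ereal_def)
      then show ?thesis unfolding g'_def using u sin_ge_zero by simp
    qed
    show "((ereal \<circ> g \<circ> real_of_ereal) \<longlongrightarrow> ereal 0) (at_right 0)"
      unfolding zero_ereal_def ereal_tendsto_simps g_def
      by (auto intro!: tendsto_eq_intros)
    show "((ereal \<circ> g \<circ> real_of_ereal) \<longlongrightarrow> ereal u) (at_left (ereal pi))"
      unfolding ereal_tendsto_simps g_def
      by (auto intro!: tendsto_eq_intros)
    show "set_integrable lborel (einterval 0 (ereal pi)) (\<lambda>x. f (g x) * g' x)" by (rule intfg)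
  qed
  have S3: "interval_lebesgue_integral lborel 0 (ereal pi) (\<lambda>x. f (g x) * g' x)
       = interval_lebesgue_integral lborel (ereal 0) (ereal pi) Ec"
    unfolding zero_ereal_def[symmetric]
    by (rule interval_integral_cong) (auto simp: fg zero_ereal_def)
  have S4: "interval_lebesgue_integral lborel (ereal 0) (ereal pi) Ec = integral {0..pi} Ec"
    by (rule interval_integral_eq_integral) (use intEc in auto)
  have S5: "integral {0..pi} Ec = HH a 0 u / (2*pi* sqrt a)"
    unfolding Ec_def HH_def integral_divide by simp
  show ?thesis using S1 S2 S3 S4 S5 by simp
qed

lemma h_deriv1:
  assumes a: "a > 0" and u: "u > 0"
  shows "(U_density a has_real_derivative HH a 1 u / (2*pi* sqrt a)) (at u)"
proof (rule has_field_derivative_transform_within_open[where S="{0<..}"])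
  show "((\<lambda>u. HH a 0 u / (2*pi* sqrt a)) has_real_derivative HH a 1 u / (2*pi* sqrt a)) (at u)"
    using a HH_deriv[of a 0 u] by (auto intro!: derivative_eq_intros)
qed (use u U_density_pos[OF a] in auto)

lemma deriv_h1:
  assumes a: "a > 0" and u: "u > 0"
  shows "deriv (U_density a) u = HH a 1 u / (2*pi* sqrt a)"
  by (rule DERIV_imp_deriv[OF h_deriv1[OF a u]])

lemma deriv_h2:
  assumes a: "a > 0" and u: "u > 0"
  shows "deriv (deriv (U_density a)) u = HH a 2 u / (2*pi* sqrt a)"
proof (rule DERIV_imp_deriv)
  show "(deriv (U_density a) has_real_derivative HH a 2 u / (2*pi* sqrt a)) (at u)"
  proof (rule has_field_derivative_transform_within_open[where S="{0<..}"])
    show "((\<lambda>u. HH a 1 u / (2*pi* sqrt a)) has_real_derivative HH a 2 u / (2*pi* sqrt a)) (at u)"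
      using a HH_deriv[of a 1 u] by (auto intro!: derivative_eq_intros simp: numeral_2_eq_2)
  qed (use u deriv_h1[OF a] in auto)
qed

definition D0 :: "real \<Rightarrow> real \<Rightarrow> real" where
  "D0 a u = HH a 0 u * HH a 2 u - (HH a 1 u)^2"

lemma D0_cont: "isCont (D0 a) u"
  unfolding D0_def by (intro continuous_intros HH_cont)

lemma D0_0: assumes "a > 0" shows "D0 a 0 = ((1-1/a)/4)^2 * pi^2 / 2"
  unfolding D0_def HH0_0 HH1_0 HH2_0 using assms by (simp add: power2_eq_square field_simps)

lemma powr_half_sq: assumes "(a::real) > 0" shows "(a powr (-1/2))^2 = 1/a"
proof -
  have "(a powr (-1/2))^2 = a powr (-1/2) * a powr (-1/2)" by (simp add: power2_eq_square)
  also have "\<dots> = a powr (-1)" using assms by (simp add: powr_add[symmetric])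
  also have "\<dots> = 1/a" using assms by (simp add: powr_minus_divide)
  finally show ?thesis .
qed

lemma not_lc:
  assumes a: "a > 1"
  shows "\<not> log_concave_on {0<..} (U_density a)"
proof
  assume lc: "log_concave_on {0<..} (U_density a)"
  have a0: "a > 0" "a \<ge> 1" using a by auto
  have "1/a < 1" using a by simp
  then have "0 < ((1-1/a)/4)^2 * pi^2 / 2" by (intro divide_pos_pos mult_pos_pos) auto
  then have "D0 a 0 > 0" unfolding D0_0[OF a0(1)] .
  moreover have "(D0 a \<longlongrightarrow> D0 a 0) (at 0)" using D0_cont[where a=a and u=0] unfolding isCont_def .
  ultimately have "eventually (\<lambda>x. 0 < D0 a x) (at 0)" by (rule order_tendstoD(1)[rotated])
  then obtain d where d: "d > 0" and dp: "\<And>x. x \<noteq> 0 \<Longrightarrow> dist x 0 < d \<Longrightarrow> 0 < D0 a x"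
    unfolding eventually_at by auto
  define H where "H = HH a 0"
  define Q where "Q = (\<lambda>u. HH a 1 u / HH a 0 u)"
  have Hpos: "H u > 0" for u unfolding H_def by (rule HH0_pos[OF a0(2)])
  have dpsi: "((\<lambda>u. ln (H u)) has_real_derivative Q u) (at u)" for u
  proof -
    have "((\<lambda>u. ln (H u)) has_real_derivative inverse (H u) * HH a 1 u) (at u)"
      using DERIV_chain2[OF DERIV_ln[OF Hpos[of u]] HH_deriv[of a 0 u, folded H_def]] by simp
    then show ?thesis unfolding Q_def H_def by (simp add: divide_inverse mult.commute)
  qed
  have dQ: "(Q has_real_derivative D0 a u / (HH a 0 u * HH a 0 u)) (at u)" for u
  proof -
    have "(Q has_real_derivative (HH a 2 u * HH a 0 u - HH a 1 u * HH a 1 u) / (HH a 0 u * HH a 0 u)) (at u)"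
      unfolding Q_def using HH_deriv[of a 0 u] HH_deriv[of a 1 u] HH0_pos[OF a0(2), of u]
      by (intro DERIV_divide) (auto simp: numeral_2_eq_2)
    then show ?thesis unfolding D0_def by (simp add: power2_eq_square algebra_simps)
  qed
  define x0 where "x0 = d/4"
  define m where "m = d/2"
  define y0 where "y0 = 3*d/4"
  have o: "0 < x0" "x0 < m" "m < y0" "y0 < d" "m - x0 = d/4" "y0 - m = d/4"
    using d unfolding x0_def m_def y0_def by auto
  have "\<exists>z>x0. z < m \<and> ln (H m) - ln (H x0) = (m - x0) * Q z"
    by (rule MVT2[OF o(2)]) (rule dpsi)
  then obtain z1 where z1: "x0 < z1" "z1 < m" "ln (H m) - ln (H x0) = (m - x0) * Q z1"
    by blast
  have "\<exists>z>m. z < y0 \<and> ln (H y0) - ln (H m) = (y0 - m) * Q z"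
    by (rule MVT2[OF o(3)]) (rule dpsi)
  then obtain z2 where z2: "m < z2" "z2 < y0" "ln (H y0) - ln (H m) = (y0 - m) * Q z2"
    by blast
  have "Q z1 < Q z2"
  proof (rule DERIV_pos_imp_increasing[where f=Q])
    show "z1 < z2" using z1 z2 by simp
    fix x assume "z1 \<le> x" "x \<le> z2"
    then have "x \<noteq> 0" "dist x 0 < d" using o z1 z2 by (auto simp: dist_real_def)
    then have "0 < D0 a x" by (rule dp)
    moreover have "0 < HH a 0 x * HH a 0 x" using HH0_pos[OF a0(2), of x] by simp
    ultimately show "\<exists>y. (Q has_real_derivative y) (at x) \<and> 0 < y"
      using dQ by (intro exI[of _ "D0 a x / (HH a 0 x * HH a 0 x)"]) auto
  qed
  then have "(d/4) * Q z1 < (d/4) * Q z2" using d by (intro mult_strict_left_mono) auto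
  then have "ln (H m) - ln (H x0) < ln (H y0) - ln (H m)"
    using z1(3) z2(3) o(5,6) by (simp only:)
  then have "ln (H m * H m) < ln (H x0 * H y0)"
  proof -
    have "ln (H m * H m) = ln (H m) + ln (H m)" using Hpos[of m] by (simp add: ln_mult)
    moreover have "ln (H x0 * H y0) = ln (H x0) + ln (H y0)" using Hpos[of x0] Hpos[of y0] by (simp add: ln_mult)
    ultimately show ?thesis using \<open>ln (H m) - ln (H x0) < ln (H y0) - ln (H m)\<close> by linarith
  qed
  then have lt: "H m * H m < H x0 * H y0"
    using ln_less_cancel_iff[OF mult_pos_pos[OF Hpos[of m] Hpos[of m]] mult_pos_pos[OF Hpos[of x0] Hpos[of y0]]] by blast
  define c where "c = 2*pi* sqrt a"
  have c: "c > 0" unfolding c_def using a by simp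
  have Ueq: "U_density a u = H u / c" if "u > 0" for u
    unfolding H_def c_def using U_density_pos[OF a0(1) that] by simp
  have "U_density a ((1/2) * x0 + (1 - 1/2) * y0) \<ge> U_density a x0 powr (1/2) * U_density a y0 powr (1 - 1/2)"
  proof -
    have L: "\<And>x y l. x \<in> {0<..} \<Longrightarrow> y \<in> {0<..} \<Longrightarrow> 0 \<le> l \<Longrightarrow> l \<le> 1 \<Longrightarrow>
        U_density a (l * x + (1 - l) * y) \<ge> U_density a x powr l * U_density a y powr (1 - l)"
      using lc unfolding log_concave_on_def by blast
    have "x0 \<in> {0<..}" "y0 \<in> {0<..}" using o by auto
    then show ?thesis by (intro L) auto
  qed
  moreover have "(1/2) * x0 + (1 - 1/2) * y0 = m" unfolding x0_def y0_def m_def by simp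
  ultimately have "U_density a m \<ge> U_density a x0 powr (1/2) * U_density a y0 powr (1/2)" by simp
  moreover have "U_density a m = H m / c" "U_density a x0 = H x0 / c" "U_density a y0 = H y0 / c"
    using o d by (auto intro!: Ueq)
  moreover have "0 \<le> H x0 / c" "0 \<le> H y0 / c" using Hpos[of x0] Hpos[of y0] c by auto
  ultimately have "H m / c \<ge> sqrt (H x0 / c) * sqrt (H y0 / c)"
    by (simp only: powr_half_sqrt)
  also have "sqrt (H x0 / c) * sqrt (H y0 / c) = sqrt (H x0 * H y0) / c"
    using c by (simp add: real_sqrt_mult[symmetric] real_sqrt_divide real_sqrt_mult_self)
  finally have "sqrt (H x0 * H y0) \<le> H m" using c by (simp add: divide_le_cancel)
  have nn: "0 \<le> H x0 * H y0" using Hpos[of x0] Hpos[of y0] by simp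
  have "(sqrt (H x0 * H y0))^2 \<le> (H m)^2"
    by (rule power_mono[OF \<open>sqrt (H x0 * H y0) \<le> H m\<close>]) (use nn in simp)
  then have "H x0 * H y0 \<le> H m * H m" by (simp add: power2_eq_square)
  with lt show False by simp
qed

lemma cdf_eq:
  assumes a: "a > 1" and u: "u > 0"
  shows "U_cdf a u = integral {0..u} (HH a 0) / (2*pi* sqrt a)"
proof -
  define c where "c = 2*pi* sqrt a"
  have a0: "a > 0" using a by simp
  define f where "f = (\<lambda>t. HH a 0 t / c)"
  have c: "c > 0" unfolding c_def using a by simp
  have contf: "continuous_on S f" for S unfolding f_def using c by (intro continuous_intros) auto
  have eq: "indicator {..u} t *\<^sub>R U_density a t = indicator {0<..u} t *\<^sub>R f t" for t
  proof (cases "t > 0")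
    case True then show ?thesis using U_density_pos[OF a0 True] by (auto simp: f_def c_def indicator_def)
  next
    case False then show ?thesis using U_density_nonpos[OF a0] by (auto simp: indicator_def)
  qed
  have "U_cdf a u = (LINT t:{0<..u}|lborel. f t)"
    unfolding U_cdf_def set_lebesgue_integral_def eq ..
  also have "\<dots> = integral {0<..u} f"
  proof (rule set_borel_integral_eq_integral)
    have "set_integrable lborel {0..u} f"
      unfolding set_integrable_def by (rule borel_integrable_compact) (auto intro: contf)
    then show "set_integrable lborel {0<..u} f"
      by (rule set_integrable_subset) auto
  qed
  also have "\<dots> = integral {0..u} f"
    by (rule integral_subset_negligible) (auto intro: negligible_subset[of "{0}"])
  also have "\<dots> = integral {0..u} (HH a 0) / c" unfolding f_def integral_divide ..
  finally show ?thesis unfolding c_def .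
qed

lemma cdf_lc:
  assumes a: "a > 1"
  shows "log_concave_on {0<..} (U_cdf a)"
proof -
  define c where "c = 2*pi* sqrt a"
  have c: "c > 0" unfolding c_def using a by simp
  have a1: "a \<ge> 1" using a by simp
  define G where "G = (\<lambda>u. integral {0..u} (HH a 0) / c)"
  have cdfG: "U_cdf a u = G u" if "u > 0" for u unfolding G_def c_def using cdf_eq[OF a that] .
  have Gpos: "G u > 0" if "u > 0" for u
  proof -
    have "integral {0..u} (\<lambda>t. pi * exp (-u)) \<le> integral {0..u} (HH a 0)"
    proof (rule integral_le)
      fix t assume "t \<in> {0..u}"
      then have "pi * exp (-u) \<le> pi * exp (-\<bar>t\<bar>)" by simp
      also have "\<dots> \<le> HH a 0 t" by (rule HH0_lower[OF a1])
      finally show "pi * exp (-u) \<le> HH a 0 t" .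
    qed (auto intro!: integrable_continuous_interval HH_contO)
    moreover have "integral {0..u} (\<lambda>t. pi * exp (-u)) = u * (pi * exp (-u))"
      using that by simp
    moreover have "0 < u * (pi * exp (-u))" using that by simp
    ultimately have "0 < integral {0..u} (HH a 0)" by linarith
    then show ?thesis unfolding G_def using c by simp
  qed
  have dG: "((\<lambda>u. - G u) has_real_derivative - (HH a 0 x / c)) (at x)" if "x \<in> {0<..}" for x
  proof -
    have x: "0 < x" using that by simp
    have "((\<lambda>u. integral {0..u} (HH a 0)) has_real_derivative HH a 0 x) (at x within {0..x+1})"
      by (rule integral_has_real_derivative) (use x in \<open>auto intro: HH_contO\<close>)
    then have "((\<lambda>u. integral {0..u} (HH a 0)) has_real_derivative HH a 0 x) (at x)"
      using at_within_Icc_at[of 0 x "x+1"] x by simp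
    then show ?thesis unfolding G_def using c by (auto intro!: derivative_eq_intros)
  qed
  have mono: "- (HH a 0 x / c) \<le> - (HH a 0 y / c)" if "x \<in> {0<..}" "y \<in> {0<..}" "x \<le> y" for x y
  proof -
    have "HH a 0 y \<le> HH a 0 x"
    proof (rule DERIV_nonpos_imp_decreasing_open[OF \<open>x \<le> y\<close>])
      show "\<exists>y. (HH a 0 has_real_derivative y) (at z) \<and> y \<le> 0" for z
        using HH_deriv[of a 0 z] HH1_nonpos[OF a1, of z] by auto
      show "continuous_on {x..y} (HH a 0)" by (rule HH_contO)
    qed
    then show ?thesis using c by (simp add: divide_right_mono)
  qed
  have cvx: "convex_on {0<..} (\<lambda>u. - G u)"
    by (rule convex_on_realI[OF _ dG mono]) (auto intro: convex_connected)
  show ?thesis unfolding log_concave_on_def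
  proof (intro conjI ballI allI impI)
    fix x :: real assume "x \<in> {0<..}"
    then show "0 \<le> U_cdf a x" using cdfG Gpos by (simp add: less_imp_le)
  next
    fix x y l :: real assume x: "x \<in> {0<..}" and y: "y \<in> {0<..}" and l: "0 \<le> l \<and> l \<le> 1"
    have xy: "x > 0" "y > 0" using x y by auto
    have "- G ((1 - (1 - l)) *\<^sub>R x + (1 - l) *\<^sub>R y) \<le> (1 - (1 - l)) * - G x + (1 - l) * - G y"
      by (rule convex_onD[OF cvx]) (use l x y in auto)
    then have conc: "l * G x + (1 - l) * G y \<le> G (l * x + (1 - l) * y)" by simp
    have pos: "l * x + (1 - l) * y > 0"
    proof (cases "l = 0")
      case True then show ?thesis using xy by simp
    next
      case False
      then have "l * x > 0" using l xy by simp
      moreover have "(1 - l) * y \<ge> 0" using l xy by simp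
      ultimately show ?thesis by simp
    qed
    have "G x powr l * G y powr (1 - l) \<le> l * G x + (1 - l) * G y"
      by (rule Youngs_inequality_0) (use l Gpos xy in auto)
    also have "\<dots> \<le> G (l * x + (1 - l) * y)" by (rule conc)
    finally show "U_cdf a x powr l * U_cdf a y powr (1 - l) \<le> U_cdf a (l * x + (1 - l) * y)"
      using cdfG[OF xy(1)] cdfG[OF xy(2)] cdfG[OF pos] by simp
  qed
qed

theorem mainTheorem12:
  fixes a2 c2 p0 p1 p2 :: real
  assumes "a2 > 1"
    and "c2 = 1 - 1 / a2"
    and "p0 = a2 powr (- 1 / 2)"
    and "p1 = 1 / 2 * c2 * p0"
    and "p2 = 3 / 8 * c2 ^ 2 * p0"
  shows "((\<lambda>u. U_density a2 u * deriv (deriv (U_density a2)) u - (deriv (U_density a2) u)^2)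
            \<longlongrightarrow> (p0 * p2 - p1 ^ 2) / 16) (at_right 0)
      \<and> (p0 * p2 - p1 ^ 2) / 16 > 0
      \<and> \<not> log_concave_on {0<..} (U_density a2)
      \<and> log_concave_on {0<..} (U_cdf a2)"
proof -
  have a: "a2 > 0" using assms(1) by simp
  define c where "c = 2 * pi * sqrt a2"
  have c: "c > 0" unfolding c_def using a by simp
  have c2: "c^2 = 4 * pi^2 * a2" unfolding c_def using a by (simp add: power_mult_distrib)
  have p0sq: "p0^2 = 1 / a2" unfolding assms(3) by (rule powr_half_sq[OF a])
  have val0: "(p0 * p2 - p1 ^ 2) / 16 = c2^2 * p0^2 / 128"
    unfolding assms(4,5) by (simp add: power2_eq_square field_simps)
  also have "\<dots> = D0 a2 0 / c^2"
    unfolding p0sq c2 D0_0[OF a] assms(2) using a by (simp add: power2_eq_square field_simps)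
  finally have val: "(p0 * p2 - p1 ^ 2) / 16 = D0 a2 0 / c^2" .
  have lim: "((\<lambda>u. U_density a2 u * deriv (deriv (U_density a2)) u - (deriv (U_density a2) u)^2)
            \<longlongrightarrow> D0 a2 0 / c^2) (at_right 0)"
  proof (rule Lim_transform_eventually)
    have "(D0 a2 \<longlongrightarrow> D0 a2 0) (at 0)" using D0_cont[where a=a2 and u=0] unfolding isCont_def .
    then have "(D0 a2 \<longlongrightarrow> D0 a2 0) (at_right 0)" by (rule tendsto_within_subset) simp
    then show "((\<lambda>u. D0 a2 u / c^2) \<longlongrightarrow> D0 a2 0 / c^2) (at_right 0)"
      by (intro tendsto_divide tendsto_const) (use c in auto)
    show "\<forall>\<^sub>F u in at_right 0. D0 a2 u / c^2 =
        U_density a2 u * deriv (deriv (U_density a2)) u - (deriv (U_density a2) u)^2"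
      using eventually_at_right_less[of 0]
    proof eventually_elim
      case (elim u)
      then show ?case
        unfolding U_density_pos[OF a elim] deriv_h1[OF a elim] deriv_h2[OF a elim] D0_def c_def[symmetric]
        using c by (simp add: power2_eq_square field_simps)
    qed
  qed
  have pos: "(p0 * p2 - p1 ^ 2) / 16 > 0"
  proof -
    have "c2 \<noteq> 0" unfolding assms(2) using assms(1) by simp
    then have "c2^2 > 0" by simp
    moreover have "p0^2 > 0" unfolding p0sq using a by simp
    ultimately have "c2^2 * p0^2 / 128 > 0" by simp
    then show ?thesis unfolding val0 .
  qed
  show ?thesis using lim val pos not_lc[OF assms(1)] cdf_lc[OF assms(1)] by simp
qed

end
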